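(* For every $n\ge 2$, letting $P_n$ denote the path on $n$ vertices: (i) ${\rm I}_e(P_n)=\frac{n-1}{3}$ if $n\equiv 1 \pmod 3$; (ii) ${\rm I}_e(P_n)=\left\lceil\frac{n-1}{3}\right\rceil$ if $n\equiv 2 \pmod 3$; (iii) ${\rm I}_e(P_n)=\left\lfloor\frac{n-1}{3}\right\rfloor$ if $n\equiv 0\pmod 3$. Moreover, for every $n\ge 3$, letting $C_n$ denote the cycle on $n$ vertices, ${\rm I}_e(C_n)={\rm I}_e(P_n)+1$.
   Context: All graphs are finite and simple. A graph is locally irregular if no two adjacent vertices have the same degree. An edge-irregulator of a graph $G$ is a set $S\subseteq E(G)$ such that $G-S$ is locally irregular; ${\rm I}_e(G)$ is the minimum cardinality of an edge-irregulator of $G$. *)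

theory Defs
  imports Complex_Main
begin

text \<open>A finite simple graph (without isolated-vertex information, irrelevant here) is given by its edge set E, each edge a 2-element set.\<close>

definition degree :: "'a set set \<Rightarrow> 'a \<Rightarrow> nat" where
  "degree E v = card {e \<in> E. v \<in> e}"

definition locally_irregular :: "'a set set \<Rightarrow> bool" where
  "locally_irregular E \<longleftrightarrow> (\<forall>u v. {u, v} \<in> E \<and> u \<noteq> v \<longrightarrow> degree E u \<noteq> degree E v)"

definition edge_irregulator :: "'a set set \<Rightarrow> 'a set set \<Rightarrow> bool" where
  "edge_irregulator E S \<longleftrightarrow> S \<subseteq> E \<and> locally_irregular (E - S)"

definition irr_e :: "'a set set \<Rightarrow> nat" where
  "irr_e E = (LEAST k. \<exists>S. edge_irregulator E S \<and> card S = k)"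

definition path_edges :: "nat \<Rightarrow> nat set set" where
  "path_edges n = {{i, Suc i} | i. Suc i < n}"

definition cycle_edges :: "nat \<Rightarrow> nat set set" where
  "cycle_edges n = path_edges n \<union> {{n - 1, 0}}"

end

theory Submission
  imports Defs
begin

lemma irr_e_generic:
  fixes f :: "nat \<Rightarrow> 'a set"
  assumes inj: "inj_on f A" and fin: "finite A"
    and li: "\<And>K. K \<subseteq> A \<Longrightarrow> locally_irregular (f ` K) = P K"
    and K0: "K0 \<subseteq> A" "P K0" "card K0 = M"
    and bound: "\<And>K. K \<subseteq> A \<Longrightarrow> P K \<Longrightarrow> card K \<le> M"
  shows "irr_e (f ` A) = card A - M"
proof -
  have ex: "edge_irregulator (f ` A) (f ` (A - K0)) \<and> card (f ` (A - K0)) = card A - M"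
  proof -
    have D: "f ` A - f ` (A - K0) = f ` K0" using inj K0(1) by (auto simp: inj_on_def)
    have "card (f ` (A - K0)) = card (A - K0)"
      using inj by (meson Diff_subset card_image inj_on_subset)
    also have "\<dots> = card A - M" using K0 fin by (simp add: card_Diff_subset finite_subset)
    finally show ?thesis using D li[OF K0(1)] K0(2) by (auto simp: edge_irregulator_def)
  qed
  have lb: "card A - M \<le> card S" if "edge_irregulator (f ` A) S" for S
  proof -
    from that have S: "S \<subseteq> f ` A" and L: "locally_irregular (f ` A - S)"
      by (auto simp: edge_irregulator_def)
    define T where "T = {a\<in>A. f a \<in> S}"
    have ST: "S = f ` T" using S by (auto simp: T_def)
    have D: "f ` A - S = f ` (A - T)" using inj by (auto simp: T_def inj_on_def)
    have "P (A - T)" using li[of "A - T"] L D by auto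
    hence "card (A - T) \<le> M" using bound by auto
    moreover have "card (A - T) = card A - card T"
      using fin by (simp add: card_Diff_subset T_def finite_subset)
    moreover have "card S = card T" using ST inj
      by (metis (no_types, lifting) T_def card_image inj_on_subset mem_Collect_eq subsetI)
    ultimately show ?thesis by linarith
  qed
  show ?thesis unfolding irr_e_def
    by (rule Least_equality) (use ex lb in auto)
qed

lemma card_pair_int:
  assumes "a \<noteq> b"
  shows "card ({a, b} \<inter> K) = (if a \<in> K then 1 else 0) + (if b \<in> K then 1 else 0)"
  using assms by (cases "a \<in> K"; cases "b \<in> K") auto

definition pe :: "nat \<Rightarrow> nat set" where "pe i = {i, Suc i}"

definition pvalid :: "nat set \<Rightarrow> bool" where
  "pvalid K = (\<forall>i\<in>K. (i \<noteq> 0 \<and> i - 1 \<in> K) \<noteq> (Suc i \<in> K))"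

lemma path_eq: "path_edges n = pe ` {..<n-1}"
  by (auto simp: path_edges_def pe_def)

lemma inj_pe: "inj_on pe A"
  by (auto simp: inj_on_def pe_def doubleton_eq_iff)

lemma deg_pe:
  assumes "finite K"
  shows "degree (pe ` K) v = (if v \<in> K then 1 else 0) + (if v \<noteq> 0 \<and> v - 1 \<in> K then 1 else 0)"
proof -
  have "{e \<in> pe ` K. v \<in> e} = pe ` {i\<in>K. v \<in> pe i}" by auto
  hence "degree (pe ` K) v = card {i\<in>K. v \<in> pe i}"
    unfolding degree_def by (metis card_image inj_pe)
  also have "\<dots> = card (({v} \<union> (if v = 0 then {} else {v - 1})) \<inter> K)"
    by (rule arg_cong[where f=card]) (auto simp: pe_def)
  also have "\<dots> = (if v \<in> K then 1 else 0) + (if v \<noteq> 0 \<and> v - 1 \<in> K then 1 else 0)"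
  proof (cases "v = 0")
    case True then show ?thesis by (cases "v \<in> K") auto
  next
    case False
    then have "({v} \<union> (if v = 0 then {} else {v - 1})) = {v, v - 1}" by auto
    then show ?thesis using card_pair_int[of v "v - 1" K] False by simp
  qed
  finally show ?thesis .
qed

lemma li_pe:
  assumes "finite K"
  shows "locally_irregular (pe ` K) = pvalid K"
proof -
  have "locally_irregular (pe ` K) = (\<forall>i\<in>K. degree (pe ` K) i \<noteq> degree (pe ` K) (Suc i))"
  proof
    assume L: "locally_irregular (pe ` K)"
    show "\<forall>i\<in>K. degree (pe ` K) i \<noteq> degree (pe ` K) (Suc i)"
    proof
      fix i assume "i \<in> K"
      then have "{i, Suc i} \<in> pe ` K" unfolding pe_def by (rule imageI)
      moreover have "i \<noteq> Suc i" by simp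
      ultimately show "degree (pe ` K) i \<noteq> degree (pe ` K) (Suc i)"
        using L[unfolded locally_irregular_def, rule_format, of i "Suc i"] by blast
    qed
  next
    assume R: "\<forall>i\<in>K. degree (pe ` K) i \<noteq> degree (pe ` K) (Suc i)"
    show "locally_irregular (pe ` K)" unfolding locally_irregular_def
    proof (intro allI impI)
      fix u v assume uv: "{u, v} \<in> pe ` K \<and> u \<noteq> v"
      then obtain i where i: "i \<in> K" "{u, v} = pe i" by blast
      then have "{u, v} = {i, Suc i}" by (simp add: pe_def)
      then have "(u = i \<and> v = Suc i) \<or> (u = Suc i \<and> v = i)" by (simp add: doubleton_eq_iff)
      then show "degree (pe ` K) u \<noteq> degree (pe ` K) v"
      proof
        assume "u = i \<and> v = Suc i" then show ?thesis using R i(1) by simp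
      next
        assume "u = Suc i \<and> v = i" then show ?thesis using R i(1) by (metis)
      qed
    qed
  qed
  also have "\<dots> = pvalid K"
    unfolding pvalid_def
  proof (rule ball_cong[OF refl])
    fix i assume "i \<in> K"
    then show "(degree (pe ` K) i \<noteq> degree (pe ` K) (Suc i)) = ((i \<noteq> 0 \<and> i - 1 \<in> K) \<noteq> (Suc i \<in> K))"
      using deg_pe[OF assms, of i] deg_pe[OF assms, of "Suc i"] by simp
  qed
  finally show ?thesis .
qed

lemma pbound:
  "K \<subseteq> {m..<N} \<Longrightarrow> pvalid K \<Longrightarrow> card K \<le> 2 * ((N + 1 - m) div 3)"
proof (induction "N - m" arbitrary: m K rule: less_induct)
  case less
  show ?case
  proof (cases "m < N")
    case False
    then have "K = {}" using less.prems by auto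
    then show ?thesis by simp
  next
    case mN: True
    show ?thesis
    proof (cases "m \<in> K")
      case False
      then have "K \<subseteq> {Suc m..<N}" using less.prems(1)
        by (metis Suc_leI atLeastLessThan_iff le_neq_implies_less subset_iff)
      from less.hyps[OF _ this less.prems(2)] mN
      have "card K \<le> 2 * ((N + 1 - Suc m) div 3)" by simp
      also have "\<dots> \<le> 2 * ((N + 1 - m) div 3)" by (intro mult_le_mono2 div_le_mono) simp
      finally show ?thesis .
    next
      case True
      have mm: "\<not> (m \<noteq> 0 \<and> m - 1 \<in> K)"
      proof
        assume "m \<noteq> 0 \<and> m - 1 \<in> K"
        then have "m - 1 \<in> {m..<N}" "m \<noteq> 0" using less.prems(1) by auto
        then show False by auto
      qed
      have pvK: "(i \<noteq> 0 \<and> i - 1 \<in> K) \<noteq> (Suc i \<in> K)" if "i \<in> K" for i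
        using less.prems(2) that unfolding pvalid_def by blast
      have s1: "Suc m \<in> K" using pvK[OF True] mm by blast
      have s2: "Suc (Suc m) \<notin> K" using pvK[OF s1] True by simp
      define K2 where "K2 = K \<inter> {m+3..<N}"
      have inK2: "x \<in> K2" if "x \<in> K" "x \<noteq> m" "x \<noteq> Suc m" for x
      proof -
        from that less.prems(1) s2 have "m \<le> x" "x < N" "x \<noteq> Suc (Suc m)" by auto
        then show ?thesis using that by (auto simp: K2_def)
      qed
      have KK: "K = {m, Suc m} \<union> K2" using True s1 inK2
        by (auto simp: K2_def)
      have sN: "Suc m < N" using s1 less.prems(1) by auto
      have pv2: "pvalid K2"
        unfolding pvalid_def
      proof
        fix i assume i: "i \<in> K2"
        have a: "(i \<noteq> 0 \<and> i - 1 \<in> K2) = (i \<noteq> 0 \<and> i - 1 \<in> K)"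
        proof -
          have "m + 3 \<le> i" using i by (auto simp: K2_def)
          then have "i \<noteq> 0" "i - 1 \<noteq> Suc (Suc m) \<longrightarrow> i - 1 \<in> K \<longrightarrow> i - 1 \<in> K2"
            using less.prems(1) by (auto simp: K2_def)
          then show ?thesis using s2 by (auto simp: K2_def)
        qed
        have b: "(Suc i \<in> K2) = (Suc i \<in> K)"
          using i less.prems(1) by (auto simp: K2_def)
        have "i \<in> K" using i by (simp add: K2_def)
        from pvK[OF this] show "(i \<noteq> 0 \<and> i - 1 \<in> K2) \<noteq> (Suc i \<in> K2)"
          using a b by simp
      qed
      have fin2: "finite K2" by (simp add: K2_def)
      have "K2 \<subseteq> {m+3..<N}" by (simp add: K2_def)
      moreover have "N - (m + 3) < N - m" using sN by simp
      ultimately have "card K2 \<le> 2 * ((N + 1 - (m + 3)) div 3)"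
        using less.hyps pv2 by blast
      moreover have "card K \<le> 2 + card K2"
      proof -
        have "card K \<le> card {m, Suc m} + card K2" unfolding KK by (rule card_Un_le)
        then show ?thesis by simp
      qed
      moreover have "(N + 1 - m) div 3 = (N + 1 - (m + 3)) div 3 + 1"
      proof -
        define d where "d = N + 1 - (m + 3)"
        have "N + 1 - m = d + 3" using sN by (simp add: d_def)
        then show ?thesis by (simp add: d_def[symmetric])
      qed
      ultimately show ?thesis by linarith
    qed
  qed
qed

definition K0s :: "nat \<Rightarrow> nat set" where "K0s q = {i. i < 3*q \<and> i mod 3 \<noteq> 2}"
lemma aux1: "i < 3*(q::nat) \<Longrightarrow> i mod 3 \<noteq> 2 \<Longrightarrow> Suc i < 3*q"
proof -
  assume a: "i < 3*q" "i mod 3 \<noteq> 2"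
  have "i = 3*(i div 3) + i mod 3" by simp
  moreover have "i div 3 < q" using a by linarith
  moreover have "i mod 3 < 3" by simp
  ultimately show ?thesis using a(2) by linarith
qed
lemma aux2: assumes "i \<in> K0s q" shows "(i \<noteq> 0 \<and> i - 1 \<in> K0s q) \<noteq> (Suc i \<in> K0s q)"
proof -
  have a: "i < 3*q" "i mod 3 \<noteq> 2" using assms by (auto simp: K0s_def)
  have s: "Suc i < 3*q" using aux1[OF a] .
  have "i mod 3 < 3" by simp
  then consider "i mod 3 = 0" | "i mod 3 = 1" using a(2) by linarith
  then show ?thesis
  proof cases
    case 1
    then have "Suc i mod 3 = 1" by (simp add: mod_Suc)
    moreover have "i \<noteq> 0 \<Longrightarrow> (i - 1) mod 3 = 2"
      using 1 by (cases i) (auto simp: mod_Suc split: if_splits)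
    ultimately show ?thesis using s by (auto simp: K0s_def)
  next
    case 2
    then have "Suc i mod 3 = 2" by (simp add: mod_Suc)
    moreover have "i \<noteq> 0" "(i - 1) mod 3 = 0"
      using 2 by (cases i; auto simp: mod_Suc split: if_splits)+
    ultimately show ?thesis using a by (auto simp: K0s_def)
  qed
qed

lemma card_K0: "card (K0s q) = 2 * q"
proof (induction q)
  case 0 then show ?case by (simp add: K0s_def)
next
  case (Suc q)
  have "K0s (Suc q) = insert (3*q) (insert (3*q+1) (K0s q))"
    unfolding K0s_def by auto presburger+
  moreover have "3*q \<notin> K0s q" "3*q+1 \<notin> K0s q" by (auto simp: K0s_def)
  ultimately show ?case using Suc by (simp add: K0s_def)
qed

lemma K0s_sub: "K0s (n div 3) \<subseteq> {..<n-1}"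
proof
  fix i assume "i \<in> K0s (n div 3)"
  then have "Suc i < 3 * (n div 3)" using aux1 by (auto simp: K0s_def)
  moreover have "3 * (n div 3) \<le> n" by simp
  ultimately show "i \<in> {..<n-1}" by simp
qed

lemma path_irr: "n \<ge> 2 \<Longrightarrow> irr_e (path_edges n) = (n - 1) - 2 * (n div 3)"
proof -
  assume n: "n \<ge> 2"
  have "irr_e (pe ` {..<n-1}) = card {..<n-1} - 2 * (n div 3)"
  proof (rule irr_e_generic[where P = pvalid])
    show "inj_on pe {..<n - 1}" by (rule inj_pe)
    show "finite {..<n-1}" by simp
    show "locally_irregular (pe ` K) = pvalid K" if "K \<subseteq> {..<n-1}" for K
      using li_pe that finite_subset by blast
    show "K0s (n div 3) \<subseteq> {..<n-1}" by (rule K0s_sub)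
    show "pvalid (K0s (n div 3))" unfolding pvalid_def using aux2 by blast
    show "card (K0s (n div 3)) = 2 * (n div 3)" by (rule card_K0)
    show "card K \<le> 2 * (n div 3)" if "K \<subseteq> {..<n-1}" "pvalid K" for K
    proof -
      have "K \<subseteq> {0..<n-1}" using that by auto
      from pbound[OF this that(2)] show ?thesis using n by simp
    qed
  qed
  then show ?thesis by (simp add: path_eq)
qed

definition nx :: "nat \<Rightarrow> nat \<Rightarrow> nat" where "nx n i = (if Suc i = n then 0 else Suc i)"
definition pv :: "nat \<Rightarrow> nat \<Rightarrow> nat" where "pv n i = (if i = 0 then n - 1 else i - 1)"
definition ce :: "nat \<Rightarrow> nat \<Rightarrow> nat set" where "ce n i = {i, nx n i}"
definition cvalid :: "nat \<Rightarrow> nat set \<Rightarrow> bool" where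
  "cvalid n K = (\<forall>i\<in>K. (pv n i \<in> K) \<noteq> (nx n i \<in> K))"

lemma cycle_eq: assumes "n \<ge> 3" shows "cycle_edges n = ce n ` {..<n}"
proof
  show "cycle_edges n \<subseteq> ce n ` {..<n}"
  proof
    fix x assume "x \<in> cycle_edges n"
    then consider i where "x = {i, Suc i}" "Suc i < n" | "x = {n - 1, 0}"
      by (auto simp: cycle_edges_def path_edges_def)
    then show "x \<in> ce n ` {..<n}"
    proof cases
      case 1
      then have "x = ce n i" by (auto simp: ce_def nx_def)
      then show ?thesis using 1 by auto
    next
      case 2
      then have "x = ce n (n - 1)" using assms by (auto simp: ce_def nx_def)
      then show ?thesis using assms by auto
    qed
  qed
next
  show "ce n ` {..<n} \<subseteq> cycle_edges n"
  proof
    fix x assume "x \<in> ce n ` {..<n}"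
    then obtain i where i: "i < n" "x = ce n i" by auto
    show "x \<in> cycle_edges n"
    proof (cases "Suc i = n")
      case True
      then have "x = {n - 1, 0}" using i by (auto simp: ce_def nx_def)
      then show ?thesis by (simp add: cycle_edges_def)
    next
      case False
      then have "x = {i, Suc i}" "Suc i < n" using i by (auto simp: ce_def nx_def)
      then show ?thesis by (auto simp: cycle_edges_def path_edges_def)
    qed
  qed
qed

lemma inj_ce: assumes "n \<ge> 3" shows "inj_on (ce n) {..<n}"
proof
  fix i j assume i: "i \<in> {..<n}" and j: "j \<in> {..<n}" and e: "ce n i = ce n j"
  then have "(i = j \<and> nx n i = nx n j) \<or> (i = nx n j \<and> nx n i = j)"
    by (auto simp: ce_def doubleton_eq_iff)
  then show "i = j" using i j assms by (auto simp: nx_def split: if_splits)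
qed

lemma nx_lt: "i < n \<Longrightarrow> nx n i < n" by (auto simp: nx_def)
lemma pv_lt: "i < n \<Longrightarrow> pv n i < n" by (auto simp: pv_def)
lemma pv_nx: "i < n \<Longrightarrow> pv n (nx n i) = i" by (auto simp: pv_def nx_def)

lemma nx_pv_iff: "i < n \<Longrightarrow> v < n \<Longrightarrow> (v = nx n i) = (i = pv n v)"
  by (auto simp: nx_def pv_def)

lemma deg_ce:
  assumes n: "n \<ge> 3" and K: "K \<subseteq> {..<n}" and v: "v < n"
  shows "degree (ce n ` K) v = (if v \<in> K then 1 else 0) + (if pv n v \<in> K then 1 else 0)"
proof -
  have inj: "inj_on (ce n) K" using inj_ce[OF n] K inj_on_subset by blast
  have "{e \<in> ce n ` K. v \<in> e} = ce n ` {i\<in>K. v \<in> ce n i}" by auto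
  moreover have "card (ce n ` {i\<in>K. v \<in> ce n i}) = card {i\<in>K. v \<in> ce n i}"
    by (rule card_image) (rule inj_on_subset[OF inj], blast)
  ultimately have "degree (ce n ` K) v = card {i\<in>K. v \<in> ce n i}"
    unfolding degree_def by simp
  also have "{i\<in>K. v \<in> ce n i} = {v, pv n v} \<inter> K"
  proof (rule set_eqI)
    fix i
    show "(i \<in> {i \<in> K. v \<in> ce n i}) = (i \<in> {v, pv n v} \<inter> K)"
    proof (cases "i \<in> K")
      case True
      then have "i < n" using K by auto
      then have "(v = nx n i) = (i = pv n v)" using v nx_pv_iff by blast
      then show ?thesis using True by (auto simp: ce_def)
    qed simp
  qed
  also have "card ({v, pv n v} \<inter> K) = (if v \<in> K then 1 else 0) + (if pv n v \<in> K then 1 else 0)"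
    by (rule card_pair_int) (use n v in \<open>auto simp: pv_def\<close>)
  finally show ?thesis .
qed

lemma li_ce:
  assumes n: "n \<ge> 3" and K: "K \<subseteq> {..<n}"
  shows "locally_irregular (ce n ` K) = cvalid n K"
proof -
  have dd: "(degree (ce n ` K) i \<noteq> degree (ce n ` K) (nx n i)) = ((pv n i \<in> K) \<noteq> (nx n i \<in> K))"
    if "i \<in> K" for i
  proof -
    have i: "i < n" using that K by auto
    show ?thesis using deg_ce[OF n K i] deg_ce[OF n K nx_lt[OF i]] pv_nx[OF i] that by simp
  qed
  have "locally_irregular (ce n ` K) = (\<forall>i\<in>K. degree (ce n ` K) i \<noteq> degree (ce n ` K) (nx n i))"
  proof
    assume L: "locally_irregular (ce n ` K)"
    show "\<forall>i\<in>K. degree (ce n ` K) i \<noteq> degree (ce n ` K) (nx n i)"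
    proof
      fix i assume i: "i \<in> K"
      then have "{i, nx n i} \<in> ce n ` K" unfolding ce_def by (rule imageI)
      moreover have "i \<noteq> nx n i" using n by (simp add: nx_def)
      ultimately show "degree (ce n ` K) i \<noteq> degree (ce n ` K) (nx n i)"
        using L[unfolded locally_irregular_def, rule_format, of i "nx n i"] by blast
    qed
  next
    assume R: "\<forall>i\<in>K. degree (ce n ` K) i \<noteq> degree (ce n ` K) (nx n i)"
    show "locally_irregular (ce n ` K)" unfolding locally_irregular_def
    proof (intro allI impI)
      fix u v assume "{u, v} \<in> ce n ` K \<and> u \<noteq> v"
      then obtain i where i: "i \<in> K" "{u, v} = ce n i" by blast
      then have "{u, v} = {i, nx n i}" by (simp add: ce_def)
      then have "(u = i \<and> v = nx n i) \<or> (u = nx n i \<and> v = i)" by (simp add: doubleton_eq_iff)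
      then show "degree (ce n ` K) u \<noteq> degree (ce n ` K) v"
      proof
        assume "u = i \<and> v = nx n i" then show ?thesis using R i(1) by simp
      next
        assume "u = nx n i \<and> v = i" then show ?thesis using R i(1) by metis
      qed
    qed
  qed
  also have "\<dots> = cvalid n K" unfolding cvalid_def using dd by (rule ball_cong[OF refl])
  finally show ?thesis .
qed

definition rot :: "nat \<Rightarrow> nat \<Rightarrow> nat \<Rightarrow> nat" where
  "rot n j i = (if j < i then i - Suc j else i + n - Suc j)"

lemma rot_pv: "i < n \<Longrightarrow> j < n \<Longrightarrow> rot n j (pv n i) = pv n (rot n j i)"
  unfolding rot_def pv_def
  apply (cases "i = 0"; cases "j < i"; cases "j < i - 1"; simp?; linarith?)
  done

lemma rot_nx: "i < n \<Longrightarrow> j < n \<Longrightarrow> rot n j (nx n i) = nx n (rot n j i)"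
  unfolding rot_def nx_def
  apply (cases "Suc i = n"; cases "j < i"; cases "j < Suc i"; cases "j = 0"; simp?; linarith?)
  done

lemma rot_lt: "i < n \<Longrightarrow> j < n \<Longrightarrow> rot n j i < n"
  unfolding rot_def by (cases "j < i") auto
lemma rot_inj: "j < n \<Longrightarrow> inj_on (rot n j) {..<n}"
  unfolding inj_on_def rot_def
  apply (intro ballI impI)
  subgoal for x y by (cases "j < x"; cases "j < y"; simp; linarith?)
  done
lemma rot_n1: "i < n \<Longrightarrow> j < n \<Longrightarrow> rot n j i = n - 1 \<longleftrightarrow> i = j"
  unfolding rot_def by (cases "j < i"; simp?; linarith?)

lemma cbound:
  assumes n: "n \<ge> 3" and K: "K \<subseteq> {..<n}" and cv: "cvalid n K"
  shows "card K \<le> 2 * (n div 3)"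
proof -
  have "K \<noteq> {..<n}"
  proof
    assume "K = {..<n}"
    then have "pv n 0 \<in> K" "nx n 0 \<in> K" "0 \<in> K" using n by (auto simp: pv_def nx_def)
    then show False using cv unfolding cvalid_def by blast
  qed
  then obtain j where j: "j < n" "j \<notin> K" using K by auto
  define r where "r = rot n j"
  have r_lt: "r i < n" if "i < n" for i unfolding r_def by (rule rot_lt[OF that j(1)])
  have r_inj: "inj_on r {..<n}" unfolding r_def by (rule rot_inj[OF j(1)])
  have r_pv: "r (pv n i) = pv n (r i)" if "i < n" for i
    unfolding r_def by (rule rot_pv[OF that j(1)])
  have r_nx: "r (nx n i) = nx n (r i)" if "i < n" for i
    unfolding r_def by (rule rot_nx[OF that j(1)])
  have r_n1: "r i = n - 1 \<longleftrightarrow> i = j" if "i < n" for i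
    unfolding r_def by (rule rot_n1[OF that j(1)])
  define K' where "K' = r ` K"
  have memK: "r x \<in> K' \<longleftrightarrow> x \<in> K" if "x < n" for x
    using that K r_inj unfolding K'_def inj_on_def by blast
  have K'sub: "K' \<subseteq> {0..<n-1}"
  proof
    fix y assume "y \<in> K'"
    then obtain i where "i \<in> K" "y = r i" by (auto simp: K'_def)
    moreover have "i < n" "i \<noteq> j" using \<open>i \<in> K\<close> K j by auto
    ultimately have "r i < n" "r i \<noteq> n - 1" using r_lt[of i] r_n1[of i] by auto
    then show "y \<in> {0..<n-1}" using \<open>y = r i\<close> by auto
  qed
  have n1: "n - 1 \<notin> K'" using K'sub by auto
  have pvK': "pvalid K'" unfolding pvalid_def
  proof
    fix y assume y: "y \<in> K'"
    then obtain i where i: "i \<in> K" "y = r i" by (auto simp: K'_def)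
    have il: "i < n" using i K by auto
    have yl: "y < n - 1" using y K'sub by auto
    have A: "(y \<noteq> 0 \<and> y - 1 \<in> K') = (pv n y \<in> K')"
      using n1 by (auto simp: pv_def)
    have B: "(Suc y \<in> K') = (nx n y \<in> K')" using yl by (auto simp: nx_def)
    have C: "(pv n y \<in> K') = (pv n i \<in> K)"
      using r_pv[OF il] memK[OF pv_lt[OF il]] i by simp
    have D: "(nx n y \<in> K') = (nx n i \<in> K)"
      using r_nx[OF il] memK[OF nx_lt[OF il]] i by simp
    show "(y \<noteq> 0 \<and> y - 1 \<in> K') \<noteq> (Suc y \<in> K')"
      using A B C D cv i(1) unfolding cvalid_def by auto
  qed
  have "card K' \<le> 2 * ((n - 1 + 1 - 0) div 3)" by (rule pbound[OF K'sub pvK'])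
  moreover have "card K' = card K" unfolding K'_def
    using card_image r_inj K inj_on_subset by blast
  ultimately show ?thesis using n by simp
qed

lemma cvalid_K0: assumes n: "n \<ge> 3" shows "cvalid n (K0s (n div 3))"
  unfolding cvalid_def
proof
  fix i assume i: "i \<in> K0s (n div 3)"
  have s: "Suc i < 3 * (n div 3)" using i aux1 by (auto simp: K0s_def)
  have le: "3 * (n div 3) \<le> n" by simp
  show "(pv n i \<in> K0s (n div 3)) \<noteq> (nx n i \<in> K0s (n div 3))"
  proof (cases "i = 0")
    case True
    have "n - 1 \<notin> K0s (n div 3)"
    proof
      assume "n - 1 \<in> K0s (n div 3)"
      then have "Suc (n - 1) < 3 * (n div 3)" using aux1 by (auto simp: K0s_def)
      then show False using le n by simp
    qed
    moreover have "1 \<in> K0s (n div 3)" using s True by (auto simp: K0s_def)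
    ultimately show ?thesis using True n by (auto simp: pv_def nx_def)
  next
    case False
    have "pv n i = i - 1" "nx n i = Suc i" using False s le by (auto simp: pv_def nx_def)
    then show ?thesis using aux2[OF i] False by simp
  qed
qed

lemma cycle_irr: "n \<ge> 3 \<Longrightarrow> irr_e (cycle_edges n) = n - 2 * (n div 3)"
proof -
  assume n: "n \<ge> 3"
  have "irr_e (ce n ` {..<n}) = card {..<n} - 2 * (n div 3)"
  proof (rule irr_e_generic[where P = "cvalid n"])
    show "inj_on (ce n) {..<n}" by (rule inj_ce[OF n])
    show "finite {..<n}" by simp
    show "locally_irregular (ce n ` K) = cvalid n K" if "K \<subseteq> {..<n}" for K
      using li_ce[OF n that] .
    show "K0s (n div 3) \<subseteq> {..<n}" using K0s_sub[of n] by auto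
    show "cvalid n (K0s (n div 3))" by (rule cvalid_K0[OF n])
    show "card (K0s (n div 3)) = 2 * (n div 3)" by (rule card_K0)
    show "card K \<le> 2 * (n div 3)" if "K \<subseteq> {..<n}" "cvalid n K" for K
      using cbound[OF n that] .
  qed
  then show ?thesis using cycle_eq[OF n] by simp
qed

lemma ceil_case: "nat (ceiling ((real (3 * a + 2) - 1) / 3)) = a + 1"
proof -
  have e: "(real (3 * a + 2) - 1) / 3 = real a + 1/3" by (simp add: field_simps)
  have c: "ceiling (real a + 1/3) = int a + 1" by (rule ceiling_unique) auto
  show ?thesis unfolding e by (simp only: c)
qed

lemma floor_case: "nat (floor ((real (3 * a + 3) - 1) / 3)) = a"
proof -
  have e: "(real (3 * a + 3) - 1) / 3 = real a + 2/3" by (simp add: field_simps)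
  have c: "floor (real a + 2/3) = int a" by (rule floor_unique) auto
  show ?thesis unfolding e by (simp only: c)
qed

theorem theorem4:
  shows "(\<forall>n::nat. n \<ge> 2 \<longrightarrow>
            (n mod 3 = 1 \<longrightarrow> irr_e (path_edges n) = (n - 1) div 3) \<and>
            (n mod 3 = 2 \<longrightarrow> irr_e (path_edges n) = nat (ceiling ((real n - 1) / 3))) \<and>
            (n mod 3 = 0 \<longrightarrow> irr_e (path_edges n) = nat (floor ((real n - 1) / 3))))
       \<and> (\<forall>n::nat. n \<ge> 3 \<longrightarrow> irr_e (cycle_edges n) = irr_e (path_edges n) + 1)"
proof (intro conjI allI impI)
  fix n :: nat assume n: "n \<ge> 2" "n mod 3 = 1"
  define a where "a = n div 3"
  have "n = 3 * (n div 3) + n mod 3" by simp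
  then have na: "n = 3 * a + 1" using n(2) unfolding a_def by linarith
  show "irr_e (path_edges n) = (n - 1) div 3" using path_irr[OF n(1)] na by simp
next
  fix n :: nat assume n: "n \<ge> 2" "n mod 3 = 2"
  define a where "a = n div 3"
  have "n = 3 * (n div 3) + n mod 3" by simp
  then have na: "n = 3 * a + 2" using n(2) unfolding a_def by linarith
  have i: "irr_e (path_edges n) = a + 1" using path_irr[OF n(1)] na unfolding a_def by linarith
  have c: "nat (ceiling ((real n - 1) / 3)) = a + 1" using ceil_case[of a] na by simp
  show "irr_e (path_edges n) = nat (ceiling ((real n - 1) / 3))" using i c by simp
next
  fix n :: nat assume n: "n \<ge> 2" "n mod 3 = 0"
  define a where "a = n div 3 - 1"
  have "n = 3 * (n div 3) + n mod 3" by simp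
  then have na: "n = 3 * a + 3" using n unfolding a_def by linarith
  have d: "n div 3 = a + 1" using n(1) \<open>n = 3 * (n div 3) + n mod 3\<close> n(2) unfolding a_def by linarith
  have i: "irr_e (path_edges n) = a" using path_irr[OF n(1)] na d by linarith
  have c: "nat (floor ((real n - 1) / 3)) = a" using floor_case[of a] na by simp
  show "irr_e (path_edges n) = nat (floor ((real n - 1) / 3))" using i c by simp
next
  fix n :: nat assume n: "n \<ge> 3"
  show "irr_e (cycle_edges n) = irr_e (path_edges n) + 1"
  proof -
    have "n \<ge> 2" using n by simp
    from path_irr[OF this] cycle_irr[OF n] show ?thesis using n by linarith
  qed
qed

end
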